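(* Let $n\ge4$ be even. The set of words $\tau\in\mathcal{A}_n^{\mathbb{N}}$ that are not injective is $\nu_n$-null.
   Context: Let $\mathcal{A}_n=\{1,\dots,5n-6\}$, $\mathcal{A}_n^m$ words of length $m$, $\mathcal{A}_n^*$ all finite words, $\mathcal{A}_n^{\mathbb{N}}$ infinite words; for a word $\tau$, $\tau(m)$ is its prefix of length $m$. $\nu_n$ is the probability measure on $\mathcal{A}_n^{\mathbb{N}}$ (on the $\sigma$-algebra generated by cylinders) with $\nu_n(\{\tau:\tau(|w|)=w\})=(5n-6)^{-|w|}$ for all $w\in\mathcal{A}_n^*$. Define maps $\psi^1_{n,j},\psi^2_{n,j}:\mathbb{R}^2\to\mathbb{R}^2$, $j\in\mathcal{A}_n$, each of the form $x\mapsto\frac1nx+b$: for $j=1,\dots,4n-4$, $\psi^1_{n,j}=\psi^2_{n,j}$ map $[0,1]^2$ onto the $4n-4$ squares of the grid of $n^2$ closed squares of side $1/n$ in $[0,1]^2$ meeting $\partial[0,1]^2$; for $j=4n-3+i$, $i=0,\dots,\frac n2-2$, $\psi^1_{n,j}(x)=\psi^2_{n,j}(x)=\frac1nx+(\frac12+\frac in,\frac1n)$; for $j=4n+\frac n2-4+i$, $i=0,\dots,\frac n2-2$, $\psi^1_{n,j}(x)=\frac1nx+(\frac{i+1}n,\frac2n)$, $\psi^2_{n,j}(x)=\frac1nx+(\frac{i+1}n,\frac1n)$. A choice function is any $\eta:\mathcal{A}_n^*\to\{1,2\}$; $\phi^\eta_\varepsilon=\mathrm{id}$, $\phi^\eta_w=\psi^{\eta(\varepsilon)}_{n,i_1}\circ\psi^{\eta(i_1)}_{n,i_2}\circ\cdots\circ\psi^{\eta(i_1\cdots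 i_{m-1})}_{n,i_m}$ for $w=i_1\cdots i_m$; $K^\eta=\bigcap_{m\ge0}\bigcup_{w\in\mathcal{A}_n^m}\phi^\eta_w([0,1]^2)$; $\pi_\eta:\mathcal{A}_n^{\mathbb{N}}\to K^\eta$, $\pi_\eta(\tau)=\lim_{m\to\infty}\phi^\eta_{\tau(m)}(\mathbf{0})$. A word $\tau$ is injective if for every choice function $\eta$, $\pi_\eta^{-1}(\{\pi_\eta(\tau)\})=\{\tau\}$. *)

theory Defs
  imports "HOL-Probability.Probability"
begin

definition alphabet :: "nat \<Rightarrow> nat set" where
  "alphabet n = {1..5*n-6}"

text \<open>Lower-left corners (a,b) (in units of 1/n) of the 4n-4 grid squares meeting the
  boundary of the unit square, in a fixed enumeration.\<close>
definition boundary_corners :: "nat \<Rightarrow> (nat \<times> nat) list" where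
  "boundary_corners n = filter (\<lambda>(a,b). a = 0 \<or> a = n - 1 \<or> b = 0 \<or> b = n - 1)
      [(a,b). a \<leftarrow> [0..<n], b \<leftarrow> [0..<n]]"

definition psi_trans :: "nat \<Rightarrow> nat \<Rightarrow> nat \<Rightarrow> real \<times> real" where
  "psi_trans n k j =
     (if 1 \<le> j \<and> j \<le> 4*n-4 then
        (let (a,b) = boundary_corners n ! (j - 1) in (real a / real n, real b / real n))
      else if 4*n-3 \<le> j \<and> j \<le> 4*n-3 + (n div 2 - 2) then
        (let i = j - (4*n-3) in (1/2 + real i / real n, 1 / real n))
      else if 4*n + n div 2 - 4 \<le> j \<and> j \<le> 4*n + n div 2 - 4 + (n div 2 - 2) then
        (let i = j - (4*n + n div 2 - 4) in
           if k = 1 then (real (i+1) / real n, 2 / real n)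
           else (real (i+1) / real n, 1 / real n))
      else (0, 0))"

definition psi :: "nat \<Rightarrow> nat \<Rightarrow> nat \<Rightarrow> real \<times> real \<Rightarrow> real \<times> real" where
  "psi n k j x = (1 / real n) *\<^sub>R x + psi_trans n k j"

text \<open>phi^eta_w, where pre is the already read prefix.\<close>
fun phi_aux :: "nat \<Rightarrow> (nat list \<Rightarrow> nat) \<Rightarrow> nat list \<Rightarrow> nat list \<Rightarrow> real \<times> real \<Rightarrow> real \<times> real" where
  "phi_aux n \<eta> pre [] = id"
| "phi_aux n \<eta> pre (i # w) = psi n (\<eta> pre) i \<circ> phi_aux n \<eta> (pre @ [i]) w"

definition phi :: "nat \<Rightarrow> (nat list \<Rightarrow> nat) \<Rightarrow> nat list \<Rightarrow> real \<times> real \<Rightarrow> real \<times> real" where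
  "phi n \<eta> w = phi_aux n \<eta> [] w"

definition choice_fun :: "(nat list \<Rightarrow> nat) \<Rightarrow> bool" where
  "choice_fun \<eta> \<longleftrightarrow> (\<forall>w. \<eta> w \<in> {1,2})"

definition prefix_word :: "(nat \<Rightarrow> nat) \<Rightarrow> nat \<Rightarrow> nat list" where
  "prefix_word \<tau> m = map \<tau> [0..<m]"

definition coding_map :: "nat \<Rightarrow> (nat list \<Rightarrow> nat) \<Rightarrow> (nat \<Rightarrow> nat) \<Rightarrow> real \<times> real" where
  "coding_map n \<eta> \<tau> = lim (\<lambda>m. phi n \<eta> (prefix_word \<tau> m) (0, 0))"

definition words :: "nat \<Rightarrow> (nat \<Rightarrow> nat) set" where
  "words n = {\<tau>. \<forall>k. \<tau> k \<in> alphabet n}"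

definition nu :: "nat \<Rightarrow> (nat \<Rightarrow> nat) measure" where
  "nu n = PiM UNIV (\<lambda>_. uniform_count_measure (alphabet n))"

definition injective_word :: "nat \<Rightarrow> (nat \<Rightarrow> nat) \<Rightarrow> bool" where
  "injective_word n \<tau> \<longleftrightarrow>
     (\<forall>\<eta>. choice_fun \<eta> \<longrightarrow>
        {\<sigma> \<in> words n. coding_map n \<eta> \<sigma> = coding_map n \<eta> \<tau>} = {\<tau>})"

end

theory Submission
  imports Defs
begin


definition Tn :: "nat \<Rightarrow> nat \<Rightarrow> nat \<Rightarrow> nat \<times> nat" where
  "Tn n k j =
     (if 1 \<le> j \<and> j \<le> 4*n-4 then boundary_corners n ! (j - 1)
      else if 4*n-3 \<le> j \<and> j \<le> 4*n-3 + (n div 2 - 2) then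
        (n div 2 + (j - (4*n-3)), 1)
      else if 4*n + n div 2 - 4 \<le> j \<and> j \<le> 4*n + n div 2 - 4 + (n div 2 - 2) then
        (let i = j - (4*n + n div 2 - 4) in
           if k = 1 then (i+1, 2) else (i+1, 1))
      else (0, 0))"

lemma psi_trans_Tn:
  assumes "even n" "n > 0"
  shows "psi_trans n k j = (real (fst (Tn n k j)) / real n, real (snd (Tn n k j)) / real n)"
proof -
  obtain h where h: "n = 2*h" using assms by auto
  have hp: "h > 0" using h assms by auto
  have e: "1/2 + real i / real n = real (n div 2 + i) / real n" for i
    using h hp by (simp add: field_simps)
  show ?thesis
    unfolding psi_trans_def Tn_def
    by (auto simp: Let_def e case_prod_beta split: prod.splits)
qed

lemma bc_set: "set (boundary_corners n) = {(a,b). a < n \<and> b < n \<and> (a = 0 \<or> a = n - 1 \<or> b = 0 \<or> b = n - 1)}"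
  unfolding boundary_corners_def by (auto simp: product_concat_map[symmetric])

lemma bc_distinct: "distinct (boundary_corners n)"
  unfolding boundary_corners_def
  by (simp add: product_concat_map[symmetric] distinct_product)

lemma bc_length:
  assumes "n \<ge> 2"
  shows "length (boundary_corners n) = 4*n-4"
proof -
  have d: "distinct [(a,b). a \<leftarrow> [0..<n], b \<leftarrow> [0..<n]]"
    by (simp add: product_concat_map[symmetric] distinct_product)
  have s: "set [(a,b). a \<leftarrow> [0..<n], b \<leftarrow> [0..<n]] = {..<n} \<times> {..<n}" by auto
  let ?P = "(\<lambda>(a,b). a = 0 \<or> a = n - 1 \<or> b = 0 \<or> b = n - 1)"
  have "length (boundary_corners n) = card ({x. ?P x} \<inter> ({..<n} \<times> {..<n}))"
    unfolding boundary_corners_def using distinct_length_filter[OF d, of ?P] s by simp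
  also have "{x. ?P x} \<inter> ({..<n} \<times> {..<n}) = ({..<n} \<times> {..<n}) - ({1..n-2} \<times> {1..n-2})"
    using assms by auto
  also have "card \<dots> = n*n - (n-2)*(n-2)"
    by (subst card_Diff_subset) (use assms in auto)
  also have "\<dots> = 4*n-4"
  proof -
    obtain m where "n = m + 2" using assms by (metis add.commute le_Suc_ex)
    then show ?thesis by (simp add: algebra_simps)
  qed
  finally show ?thesis .
qed

lemma Tn_bound:
  assumes "n \<ge> 4" "even n"
  shows "fst (Tn n k j) \<le> n - 1 \<and> snd (Tn n k j) \<le> n - 1"
proof -
  obtain h where h: "n = 2*h" using assms by auto
  have L: "length (boundary_corners n) = 4*n-4" using bc_length assms by auto
  show ?thesis
  proof (cases "1 \<le> j \<and> j \<le> 4*n-4")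
    case True
    then have "boundary_corners n ! (j-1) \<in> set (boundary_corners n)" using L by (intro nth_mem) linarith
    then show ?thesis using True unfolding Tn_def bc_set by auto
  next
    case False
    then show ?thesis unfolding Tn_def using assms h by (auto simp: Let_def)
  qed
qed

lemma Tn_L:
  assumes "n \<ge> 4"
  shows "Tn n k (4*n-3) = (n div 2, 1)"
  unfolding Tn_def using assms by auto

lemma Tn_inj:
  assumes "n \<ge> 4" "even n" "j \<in> alphabet n" "j' \<in> alphabet n" "Tn n k j = Tn n k j'"
  shows "j = j'"
proof -
  obtain h where h: "n = 2*h" using assms by auto
  have L: "length (boundary_corners n) = 4*n-4" using bc_length assms by auto
  have D: "distinct (boundary_corners n)" by (rule bc_distinct)
  have B1: "\<And>j. 1 \<le> j \<and> j \<le> 4*n-4 \<Longrightarrow> Tn n k j \<in> set (boundary_corners n)"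
  proof -
    fix j assume "1 \<le> j \<and> j \<le> 4*n-4"
    moreover have "boundary_corners n ! (j-1) \<in> set (boundary_corners n)" using L calculation by (intro nth_mem) linarith
    ultimately show "Tn n k j \<in> set (boundary_corners n)" unfolding Tn_def by simp
  qed
  have B2: "\<And>j. j \<in> alphabet n \<Longrightarrow> \<not> (1 \<le> j \<and> j \<le> 4*n-4) \<Longrightarrow> Tn n k j \<notin> set (boundary_corners n)"
    unfolding Tn_def bc_set alphabet_def using assms h by (auto simp: Let_def)
  consider "1 \<le> j \<and> j \<le> 4*n-4" "1 \<le> j' \<and> j' \<le> 4*n-4"
    | "1 \<le> j \<and> j \<le> 4*n-4" "\<not>(1 \<le> j' \<and> j' \<le> 4*n-4)"
    | "\<not>(1 \<le> j \<and> j \<le> 4*n-4)" "1 \<le> j' \<and> j' \<le> 4*n-4"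
    | "\<not>(1 \<le> j \<and> j \<le> 4*n-4)" "\<not>(1 \<le> j' \<and> j' \<le> 4*n-4)" by blast
  then show ?thesis
  proof cases
    case 1
    then have "boundary_corners n ! (j-1) = boundary_corners n ! (j'-1)"
      using assms(5) unfolding Tn_def by simp
    then have "j - 1 = j' - 1" using D L 1 nth_eq_iff_index_eq by fastforce
    then show ?thesis using 1 by linarith
  next
    case 2 then show ?thesis using B1 B2 assms by metis
  next
    case 3 then show ?thesis using B1 B2 assms by metis
  next
    case 4
    have hn: "n div 2 = h" "h \<ge> 2" using h assms by auto
    have R: "(4*n-3 \<le> x \<and> x \<le> 4*n-3 + (h - 2)) \<or>
             (\<not> (4*n-3 \<le> x \<and> x \<le> 4*n-3 + (h - 2)) \<and> 4*n + h - 4 \<le> x \<and> x \<le> 4*n + h - 4 + (h - 2))"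
      if "x \<in> alphabet n" "\<not>(1 \<le> x \<and> x \<le> 4*n-4)" for x
      using that h hn unfolding alphabet_def by auto
    have T2: "Tn n k x = (h + (x - (4*n-3)), 1)" if "\<not>(1 \<le> x \<and> x \<le> 4*n-4)" "4*n-3 \<le> x \<and> x \<le> 4*n-3 + (h - 2)" for x
      using that hn assms(1) unfolding Tn_def by auto
    have T3: "Tn n k x = (if k = 1 then (x - (4*n + h - 4) + 1, 2) else (x - (4*n + h - 4) + 1, 1))"
      if "\<not>(1 \<le> x \<and> x \<le> 4*n-4)" "\<not> (4*n-3 \<le> x \<and> x \<le> 4*n-3 + (h - 2))" "4*n + h - 4 \<le> x \<and> x \<le> 4*n + h - 4 + (h - 2)" for x
      using that hn assms(1) unfolding Tn_def by (auto simp: Let_def)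
    have E: "Tn n k j = Tn n k j'" by fact
    show ?thesis
      using R[OF assms(3) 4(1)] R[OF assms(4) 4(2)]
    proof (elim disjE conjE)
      assume a: "4*n-3 \<le> j" "j \<le> 4*n-3 + (h - 2)" "4*n-3 \<le> j'" "j' \<le> 4*n-3 + (h - 2)"
      show ?thesis using E T2[OF 4(1)] T2[OF 4(2)] a by (simp, arith)
    next
      assume a: "4*n-3 \<le> j" "j \<le> 4*n-3 + (h - 2)" "\<not> (4*n-3 \<le> j' \<and> j' \<le> 4*n-3 + (h - 2))"
        "4*n + h - 4 \<le> j'" "j' \<le> 4*n + h - 4 + (h - 2)"
      have "fst (Tn n k j) \<ge> h" using T2[OF 4(1)] a by simp
      moreover have "fst (Tn n k j') < h" using T3[OF 4(2)] a h hn by simp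
      ultimately show ?thesis using E by simp
    next
      assume a: "4*n-3 \<le> j'" "j' \<le> 4*n-3 + (h - 2)" "\<not> (4*n-3 \<le> j \<and> j \<le> 4*n-3 + (h - 2))"
        "4*n + h - 4 \<le> j" "j \<le> 4*n + h - 4 + (h - 2)"
      have "fst (Tn n k j') \<ge> h" using T2[OF 4(2)] a by simp
      moreover have "fst (Tn n k j) < h" using T3[OF 4(1)] a h hn by simp
      ultimately show ?thesis using E by simp
    next
      assume a: "\<not> (4*n-3 \<le> j' \<and> j' \<le> 4*n-3 + (h - 2))"
        "4*n + h - 4 \<le> j'" "j' \<le> 4*n + h - 4 + (h - 2)"
        "\<not> (4*n-3 \<le> j \<and> j \<le> 4*n-3 + (h - 2))"
        "4*n + h - 4 \<le> j" "j \<le> 4*n + h - 4 + (h - 2)"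
      have "fst (Tn n k j) = fst (Tn n k j')" using E by simp
      then have "j - (4 * n + h - 4) = j' - (4 * n + h - 4)" using T3[OF 4(1)] T3[OF 4(2)] a by (simp split: if_splits)
      then show ?thesis using a(2,5) by linarith
    qed
  qed
qed



lemma phi_aux_affine:
  "phi_aux n \<eta> pre w x = (1/real n)^length w *\<^sub>R x + phi_aux n \<eta> pre w (0,0)"
proof (induction w arbitrary: pre x)
  case Nil
  then show ?case by (simp add: zero_prod_def)
next
  case (Cons i w)
  show ?case
    using Cons[of "pre @ [i]" x] by (simp add: psi_def algebra_simps)
qed

lemma phi_aux_snoc:
  "phi_aux n \<eta> pre (w @ [a]) = phi_aux n \<eta> pre w \<circ> psi n (\<eta> (pre @ w)) a"
  by (induction w arbitrary: pre) auto

lemma prefix_Suc: "prefix_word \<tau> (Suc m) = prefix_word \<tau> m @ [\<tau> m]"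
  unfolding prefix_word_def by simp

definition dx :: "nat \<Rightarrow> (nat list \<Rightarrow> nat) \<Rightarrow> (nat \<Rightarrow> nat) \<Rightarrow> nat \<Rightarrow> nat" where
  "dx n \<eta> \<tau> i = fst (Tn n (\<eta> (prefix_word \<tau> i)) (\<tau> i))"
definition dy :: "nat \<Rightarrow> (nat list \<Rightarrow> nat) \<Rightarrow> (nat \<Rightarrow> nat) \<Rightarrow> nat \<Rightarrow> nat" where
  "dy n \<eta> \<tau> i = snd (Tn n (\<eta> (prefix_word \<tau> i)) (\<tau> i))"

definition val :: "nat \<Rightarrow> (nat \<Rightarrow> nat) \<Rightarrow> real" where
  "val n d = (\<Sum>i. real (d i) / real n ^ Suc i)"

lemma phi_prefix:
  assumes "n \<ge> 4" "even n"
  shows "phi n \<eta> (prefix_word \<tau> m) (0,0) =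
     ((\<Sum>i<m. real (dx n \<eta> \<tau> i) / real n ^ Suc i), (\<Sum>i<m. real (dy n \<eta> \<tau> i) / real n ^ Suc i))"
proof (induction m)
  case 0
  then show ?case by (simp add: phi_def prefix_word_def)
next
  case (Suc m)
  have len: "length (prefix_word \<tau> m) = m" by (simp add: prefix_word_def)
  have "phi n \<eta> (prefix_word \<tau> (Suc m)) (0,0)
      = phi n \<eta> (prefix_word \<tau> m) (psi n (\<eta> (prefix_word \<tau> m)) (\<tau> m) (0,0))"
    unfolding phi_def prefix_Suc phi_aux_snoc by simp
  also have "\<dots> = (1/real n)^m *\<^sub>R psi_trans n (\<eta> (prefix_word \<tau> m)) (\<tau> m) + phi n \<eta> (prefix_word \<tau> m) (0,0)"
    unfolding phi_def by (subst phi_aux_affine) (simp add: psi_def len zero_prod_def)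
  also have "psi_trans n (\<eta> (prefix_word \<tau> m)) (\<tau> m) = (real (dx n \<eta> \<tau> m) / real n, real (dy n \<eta> \<tau> m) / real n)"
    unfolding dx_def dy_def using assms by (subst psi_trans_Tn) auto
  finally show ?case using Suc by (simp add: power_divide field_simps)
qed

lemma val_summable:
  assumes "n \<ge> 2" "\<And>i. d i \<le> n - 1"
  shows "summable (\<lambda>i. real (d i) / real n ^ Suc i)"
proof (rule summable_comparison_test)
  show "summable (\<lambda>i. (1 / real n) ^ i)" using assms by (intro summable_geometric) auto
  show "\<exists>N. \<forall>i\<ge>N. norm (real (d i) / real n ^ Suc i) \<le> (1 / real n) ^ i"
  proof (intro exI allI impI)
    fix i
    have "real (d i) \<le> real n" using assms(2)[of i] by simp
    then have "real (d i) / real n ^ Suc i \<le> real n / real n ^ Suc i"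
      by (intro divide_right_mono) auto
    also have "\<dots> = (1 / real n) ^ i" using assms by (simp add: power_divide)
    finally show "norm (real (d i) / real n ^ Suc i) \<le> (1 / real n) ^ i" by simp
  qed
qed

lemma coding_val:
  assumes "n \<ge> 4" "even n"
  shows "coding_map n \<eta> \<tau> = (val n (dx n \<eta> \<tau>), val n (dy n \<eta> \<tau>))"
proof -
  have bx: "dx n \<eta> \<tau> i \<le> n - 1" and by': "dy n \<eta> \<tau> i \<le> n - 1" for i
    unfolding dx_def dy_def using Tn_bound[OF assms] by auto
  have sx: "summable (\<lambda>i. real (dx n \<eta> \<tau> i) / real n ^ Suc i)"
    using val_summable[of n "dx n \<eta> \<tau>"] bx assms by auto
  have sy: "summable (\<lambda>i. real (dy n \<eta> \<tau> i) / real n ^ Suc i)"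
    using val_summable[of n "dy n \<eta> \<tau>"] by' assms by auto
  have "(\<lambda>m. phi n \<eta> (prefix_word \<tau> m) (0,0)) \<longlonglongrightarrow> (val n (dx n \<eta> \<tau>), val n (dy n \<eta> \<tau>))"
    unfolding phi_prefix[OF assms] val_def
    by (intro tendsto_Pair summable_LIMSEQ sx sy)
  then show ?thesis unfolding coding_map_def by (rule limI)
qed



lemma val_bounds:
  assumes "n \<ge> 2" "\<And>i. d i \<le> n - 1"
  shows "0 \<le> val n d \<and> val n d \<le> 1"
proof -
  have s: "summable (\<lambda>i. real (d i) / real n ^ Suc i)" using val_summable assms by blast
  have g: "(\<lambda>i. (real n - 1) / real n * (1 / real n) ^ i) sums ((real n - 1) / real n * (1 / (1 - 1 / real n)))"
    using assms by (intro sums_mult geometric_sums) auto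
  have "(real n - 1) / real n * (1 / (1 - 1 / real n)) = 1" using assms by (simp add: field_simps)
  with g have g1: "(\<lambda>i. (real n - 1) / real n * (1 / real n) ^ i) sums 1" by metis
  have "val n d \<le> 1"
    unfolding val_def
  proof (rule sums_le[OF _ summable_sums[OF s] g1])
    fix i
    have "real (d i) \<le> real n - 1" using assms(2)[of i] assms(1) by (simp add: of_nat_diff)
    then have "real (d i) / real n ^ Suc i \<le> (real n - 1) / real n ^ Suc i"
      by (intro divide_right_mono) auto
    also have "\<dots> = (real n - 1) / real n * (1 / real n) ^ i" by (simp add: power_divide)
    finally show "real (d i) / real n ^ Suc i \<le> (real n - 1) / real n * (1 / real n) ^ i" .
  qed
  moreover have "0 \<le> val n d" unfolding val_def by (intro suminf_nonneg s) auto
  ultimately show ?thesis by simp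
qed

lemma val_step:
  assumes "n \<ge> 2" "\<And>i. d i \<le> n - 1"
  shows "val n d = (real (d 0) + val n (\<lambda>i. d (Suc i))) / real n"
proof -
  have s: "summable (\<lambda>i. real (d i) / real n ^ Suc i)" using val_summable assms by blast
  have s2: "summable (\<lambda>i. real (d (Suc i)) / real n ^ Suc i)" using val_summable[of n "\<lambda>i. d (Suc i)"] assms by blast
  have "(\<Sum>i. real (d (Suc i)) / real n ^ Suc (Suc i)) = (\<Sum>i. real (d i) / real n ^ Suc i) - real (d 0) / real n"
    using suminf_split_head[OF s] by simp
  moreover have "(\<Sum>i. real (d (Suc i)) / real n ^ Suc (Suc i)) = (\<Sum>i. real (d (Suc i)) / real n ^ Suc i) / real n"
    using suminf_divide[OF s2, of "real n"] by (simp add: field_simps)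
  ultimately show ?thesis unfolding val_def using assms by (simp add: field_simps)
qed

lemma val_shift_eq:
  assumes "n \<ge> 2" "\<And>i. d i \<le> n - 1" "\<And>i. d' i \<le> n - 1"
    "\<And>i. i < k \<Longrightarrow> d i = d' i" "val n d = val n d'"
  shows "val n (\<lambda>i. d (k + i)) = val n (\<lambda>i. d' (k + i))"
  using assms(4)
proof (induction k)
  case 0
  then show ?case using assms(5) by simp
next
  case (Suc k)
  have IH: "val n (\<lambda>i. d (k + i)) = val n (\<lambda>i. d' (k + i))" using Suc by auto
  have e: "d k = d' k" using Suc by auto
  have "val n (\<lambda>i. d (k + i)) = (real (d k) + val n (\<lambda>i. d (Suc k + i))) / real n"
    using val_step[of n "\<lambda>i. d (k + i)"] assms by simp
  moreover have "val n (\<lambda>i. d' (k + i)) = (real (d' k) + val n (\<lambda>i. d' (Suc k + i))) / real n"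
    using val_step[of n "\<lambda>i. d' (k + i)"] assms by simp
  ultimately show ?case using IH e assms(1) by (simp add: field_simps)
qed

lemma val_edge_step:
  assumes "n \<ge> 2" "\<And>i. d i \<le> n - 1" "val n d \<in> {0,1}"
  shows "d 0 \<in> {0, n-1} \<and> val n (\<lambda>i. d (Suc i)) \<in> {0,1}"
proof -
  have st: "val n d * real n = real (d 0) + val n (\<lambda>i. d (Suc i))"
    using val_step[OF assms(1,2)] assms(1) by (simp add: field_simps)
  have b: "0 \<le> val n (\<lambda>i. d (Suc i)) \<and> val n (\<lambda>i. d (Suc i)) \<le> 1"
    using val_bounds[of n "\<lambda>i. d (Suc i)"] assms by blast
  have d0: "real (d 0) \<le> real n - 1" using assms(2)[of 0] assms(1) by (simp add: of_nat_diff)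
  show ?thesis
  proof (cases "val n d = 0")
    case True
    then have "real (d 0) = 0 \<and> val n (\<lambda>i. d (Suc i)) = 0" using st b by simp
    then show ?thesis by simp
  next
    case False
    then have "val n d = 1" using assms(3) by simp
    then have "real n = real (d 0) + val n (\<lambda>i. d (Suc i))" using st by simp
    then have "real (d 0) = real n - 1 \<and> val n (\<lambda>i. d (Suc i)) = 1" using b d0 by linarith
    then have "real (d 0) = real (n - 1) \<and> val n (\<lambda>i. d (Suc i)) = 1" using assms(1) by (simp add: of_nat_diff)
    then have "d 0 = n - 1 \<and> val n (\<lambda>i. d (Suc i)) = 1" using of_nat_eq_iff by blast
    then show ?thesis by simp
  qed
qed

lemma val_edge:
  assumes "n \<ge> 2" "\<And>i. d i \<le> n - 1" "val n (\<lambda>i. d (K + i)) \<in> {0,1}"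
  shows "d (K + j) \<in> {0, n-1}"
proof -
  have "val n (\<lambda>i. d (K + j + i)) \<in> {0,1}" for j
  proof (induction j)
    case 0 then show ?case using assms(3) by simp
  next
    case (Suc j)
    from val_edge_step[of n "\<lambda>i. d (K + j + i)"] Suc assms(1,2)
    show ?case by simp
  qed
  from val_edge_step[OF assms(1) _ this[of j]] assms(2) show ?thesis by simp
qed

lemma val_diff:
  assumes "n \<ge> 2" "\<And>i. d i \<le> n - 1" "\<And>i. d' i \<le> n - 1"
    "val n d = val n d'" "d 0 \<noteq> d' 0"
  shows "val n (\<lambda>i. d (Suc i)) \<in> {0,1}"
proof -
  have st: "val n d * real n = real (d 0) + val n (\<lambda>i. d (Suc i))"
    using val_step[OF assms(1,2)] assms(1) by (simp add: field_simps)
  have st': "val n d' * real n = real (d' 0) + val n (\<lambda>i. d' (Suc i))"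
    using val_step[OF assms(1,3)] assms(1) by (simp add: field_simps)
  have b: "0 \<le> val n (\<lambda>i. d (Suc i)) \<and> val n (\<lambda>i. d (Suc i)) \<le> 1"
    using val_bounds[of n "\<lambda>i. d (Suc i)"] assms by blast
  have b': "0 \<le> val n (\<lambda>i. d' (Suc i)) \<and> val n (\<lambda>i. d' (Suc i)) \<le> 1"
    using val_bounds[of n "\<lambda>i. d' (Suc i)"] assms by blast
  have eq: "real (d 0) + val n (\<lambda>i. d (Suc i)) = real (d' 0) + val n (\<lambda>i. d' (Suc i))"
    using st st' assms(4) by simp
  show ?thesis
  proof (cases "d 0 < d' 0")
    case True
    then have "real (d 0) + 1 \<le> real (d' 0)" by simp
    then have "val n (\<lambda>i. d (Suc i)) = 1" using eq b b' by linarith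
    then show ?thesis by simp
  next
    case False
    then have "real (d' 0) + 1 \<le> real (d 0)" using assms(5) by simp
    then have "val n (\<lambda>i. d (Suc i)) = 0" using eq b b' by linarith
    then show ?thesis by simp
  qed
qed



lemma noninj_tail:
  assumes n: "n \<ge> 4" "even n" and tw: "\<tau> \<in> words n" and ni: "\<not> injective_word n \<tau>"
  shows "\<exists>K. \<forall>m\<ge>K. \<tau> m \<noteq> 4*n-3"
proof -
  obtain \<eta> where ch: "choice_fun \<eta>" and ne: "{\<sigma> \<in> words n. coding_map n \<eta> \<sigma> = coding_map n \<eta> \<tau>} \<noteq> {\<tau>}"
    using ni unfolding injective_word_def by blast
  then obtain \<sigma> where sw: "\<sigma> \<in> words n" and ceq: "coding_map n \<eta> \<sigma> = coding_map n \<eta> \<tau>" and st: "\<sigma> \<noteq> \<tau>"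
    using tw by blast
  have "\<exists>k. \<sigma> k \<noteq> \<tau> k" using st by auto
  define k where "k = (LEAST k. \<sigma> k \<noteq> \<tau> k)"
  have dk: "\<sigma> k \<noteq> \<tau> k" unfolding k_def by (rule LeastI_ex) fact
  have lt: "\<sigma> i = \<tau> i" if "i < k" for i using not_less_Least[of i "\<lambda>k. \<sigma> k \<noteq> \<tau> k"] that unfolding k_def by blast
  have pre: "prefix_word \<sigma> i = prefix_word \<tau> i" if "i \<le> k" for i
    unfolding prefix_word_def using lt that by auto
  have n2: "n \<ge> 2" using n by simp
  have bx: "dx n \<eta> \<rho> i \<le> n - 1" and by': "dy n \<eta> \<rho> i \<le> n - 1" for \<rho> i
    unfolding dx_def dy_def using Tn_bound[OF n] by auto
  have vx: "val n (dx n \<eta> \<sigma>) = val n (dx n \<eta> \<tau>)" and vy: "val n (dy n \<eta> \<sigma>) = val n (dy n \<eta> \<tau>)"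
    using ceq unfolding coding_val[OF n] by auto
  have ex: "dx n \<eta> \<sigma> i = dx n \<eta> \<tau> i" and ey: "dy n \<eta> \<sigma> i = dy n \<eta> \<tau> i" if "i < k" for i
    unfolding dx_def dy_def using pre[of i] lt[OF that] that by auto
  have sx: "val n (\<lambda>i. dx n \<eta> \<tau> (k + i)) = val n (\<lambda>i. dx n \<eta> \<sigma> (k + i))"
    by (rule val_shift_eq[OF n2 bx bx]) (use ex vx in auto)
  have sy: "val n (\<lambda>i. dy n \<eta> \<tau> (k + i)) = val n (\<lambda>i. dy n \<eta> \<sigma> (k + i))"
    by (rule val_shift_eq[OF n2 by' by']) (use ey vy in auto)
  let ?p = "\<eta> (prefix_word \<tau> k)"
  have "Tn n ?p (\<tau> k) \<noteq> Tn n ?p (\<sigma> k)"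
    using Tn_inj[OF n, of "\<tau> k" "\<sigma> k" ?p] tw sw dk unfolding words_def by auto
  then have "dx n \<eta> \<tau> k \<noteq> dx n \<eta> \<sigma> k \<or> dy n \<eta> \<tau> k \<noteq> dy n \<eta> \<sigma> k"
    unfolding dx_def dy_def using pre[of k] by (auto simp: prod_eq_iff)
  then have edge: "(\<forall>j. dx n \<eta> \<tau> (Suc k + j) \<in> {0, n-1}) \<or> (\<forall>j. dy n \<eta> \<tau> (Suc k + j) \<in> {0, n-1})"
  proof
    assume a: "dx n \<eta> \<tau> k \<noteq> dx n \<eta> \<sigma> k"
    have "val n (\<lambda>i. dx n \<eta> \<tau> (k + Suc i)) \<in> {0,1}"
      using val_diff[of n "\<lambda>i. dx n \<eta> \<tau> (k + i)" "\<lambda>i. dx n \<eta> \<sigma> (k + i)"] n2 bx sx a by simp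
    then have "val n (\<lambda>i. dx n \<eta> \<tau> (Suc k + i)) \<in> {0,1}" by simp
    then show ?thesis using val_edge[of n "dx n \<eta> \<tau>" "Suc k"] n2 bx by blast
  next
    assume a: "dy n \<eta> \<tau> k \<noteq> dy n \<eta> \<sigma> k"
    have "val n (\<lambda>i. dy n \<eta> \<tau> (k + Suc i)) \<in> {0,1}"
      using val_diff[of n "\<lambda>i. dy n \<eta> \<tau> (k + i)" "\<lambda>i. dy n \<eta> \<sigma> (k + i)"] n2 by' sy a by simp
    then have "val n (\<lambda>i. dy n \<eta> \<tau> (Suc k + i)) \<in> {0,1}" by simp
    then show ?thesis using val_edge[of n "dy n \<eta> \<tau>" "Suc k"] n2 by' by blast
  qed
  have "\<forall>m\<ge>Suc k. \<tau> m \<noteq> 4*n-3"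
  proof (intro allI impI notI)
    fix m assume m: "Suc k \<le> m" "\<tau> m = 4*n-3"
    then obtain j where j: "m = Suc k + j" using le_Suc_ex by blast
    have T: "Tn n (\<eta> (prefix_word \<tau> m)) (\<tau> m) = (n div 2, 1)" using m Tn_L[OF n(1)] by simp
    have "n div 2 \<noteq> 0" "n div 2 \<noteq> n - 1" "(1::nat) \<noteq> 0" "(1::nat) \<noteq> n - 1" using n by auto
    then show False using edge T j unfolding dx_def dy_def by (metis empty_iff fst_conv insert_iff snd_conv)
  qed
  then show ?thesis by blast
qed



lemma tail_null:
  assumes n: "n \<ge> 4"
  shows "{\<tau> \<in> words n. \<forall>m\<ge>K. \<tau> m \<noteq> 4*n-3} \<in> null_sets (nu n)"
proof -
  let ?U = "uniform_count_measure (alphabet n)"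
  let ?L = "4*n-3"
  have fin: "finite (alphabet n)" unfolding alphabet_def by simp
  have Lin: "?L \<in> alphabet n" unfolding alphabet_def using n by auto
  have ne: "alphabet n \<noteq> {}" using Lin by auto
  have psU: "prob_space ?U" using prob_space_uniform_count_measure[OF fin ne] .
  have ps: "prob_space (nu n)" unfolding nu_def by (rule prob_space_PiM) (use psU in auto)
  interpret P: prob_space "nu n" by (rule ps)
  have sp: "space (nu n) = words n"
    unfolding nu_def words_def space_PiM space_uniform_count_measure by (auto simp: PiE_def)
  define C where "C M = prod_emb UNIV (\<lambda>_. ?U) {K..<K+M} (PiE {K..<K+M} (\<lambda>_. alphabet n - {?L}))" for M
  define r where "r = real (card (alphabet n - {?L})) / real (card (alphabet n))"
  have cardA: "card (alphabet n) = 5*n-6" unfolding alphabet_def by simp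
  have cardB: "card (alphabet n - {?L}) = 5*n-7" using Lin fin cardA by simp
  have r0: "0 \<le> r" unfolding r_def by simp
  have r1: "r < 1" unfolding r_def cardA cardB using n by (simp add: divide_less_eq)
  have Cm: "emeasure (nu n) (C M) = ennreal (r ^ M)" for M
  proof -
    have "emeasure (nu n) (C M) = (\<Prod>i\<in>{K..<K+M}. emeasure ?U (alphabet n - {?L}))"
      unfolding C_def nu_def
      by (rule emeasure_PiM_emb) (use psU in \<open>auto simp: sets_uniform_count_measure\<close>)
    also have "\<dots> = (\<Prod>i\<in>{K..<K+M}. ennreal r)"
      unfolding r_def using fin by (simp add: emeasure_uniform_count_measure divide_ennreal[symmetric] ennreal_of_nat_eq_real_of_nat)
    also have "\<dots> = ennreal (r ^ M)" using r0 by (simp add: ennreal_power)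
    finally show ?thesis .
  qed
  have Cs: "C M \<in> sets (nu n)" for M
    unfolding C_def nu_def by (rule sets_PiM_I) (auto simp: sets_uniform_count_measure)
  let ?B = "{\<tau> \<in> words n. \<forall>m\<ge>K. \<tau> m \<noteq> ?L}"
  have BC: "?B = (\<Inter>M. C M)"
  proof
    show "?B \<subseteq> (\<Inter>M. C M)"
      unfolding C_def prod_emb_def nu_def space_PiM space_uniform_count_measure words_def
      by (auto simp: PiE_def extensional_def)
    show "(\<Inter>M. C M) \<subseteq> ?B"
    proof
      fix \<tau> assume a: "\<tau> \<in> (\<Inter>M. C M)"
      have "\<tau> \<in> words n" using a sets.sets_into_space[OF Cs[of 0]] sp by auto
      moreover have "\<tau> m \<noteq> ?L" if "m \<ge> K" for m
      proof -
        have "\<tau> \<in> C (Suc m - K)" using a by auto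
        then have "restrict \<tau> {K..<K + (Suc m - K)} \<in> PiE {K..<K + (Suc m - K)} (\<lambda>_. alphabet n - {?L})"
          unfolding C_def prod_emb_def by blast
        moreover have "m \<in> {K..<K + (Suc m - K)}" using that by auto
        ultimately show ?thesis by (auto simp: PiE_def Pi_def)
      qed
      ultimately show "\<tau> \<in> ?B" by auto
    qed
  qed
  have Bs: "?B \<in> sets (nu n)" unfolding BC by (rule sets.countable_INT) (use Cs in auto)
  have le: "P.prob ?B \<le> r ^ M" for M
  proof -
    have sub: "?B \<subseteq> C M" unfolding BC by blast
    have "P.prob ?B \<le> P.prob (C M)" by (rule P.finite_measure_mono[OF sub Cs])
    also have "P.prob (C M) = r ^ M" using Cm r0 by (simp add: P.emeasure_eq_measure)
    finally show ?thesis .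
  qed
  have lim: "(\<lambda>M. r ^ M) \<longlonglongrightarrow> 0" by (rule LIMSEQ_power_zero) (use r0 r1 in simp)
  have "P.prob ?B \<le> 0"
    by (rule LIMSEQ_le_const[OF lim]) (intro exI allI impI, rule le)
  then have "P.prob ?B = 0" using measure_nonneg[of "nu n" ?B] by linarith
  then have "emeasure (nu n) ?B = 0" by (simp add: P.emeasure_eq_measure)
  then show ?thesis using Bs by (rule null_setsI)
qed


theorem lemma5p3:
  fixes n :: nat
  assumes "n \<ge> 4" and "even n"
  shows "{\<tau> \<in> words n. \<not> injective_word n \<tau>} \<in> null_sets (completion (nu n))"
proof -
  have sub: "{\<tau> \<in> words n. \<not> injective_word n \<tau>} \<subseteq> (\<Union>K. {\<tau> \<in> words n. \<forall>m\<ge>K. \<tau> m \<noteq> 4*n-3})"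
    using noninj_tail[OF assms] by blast
  have "(\<Union>K. {\<tau> \<in> words n. \<forall>m\<ge>K. \<tau> m \<noteq> 4*n-3}) \<in> null_sets (nu n)"
    using tail_null[OF assms(1)] by (intro null_sets_UN) auto
  then have "(\<Union>K. {\<tau> \<in> words n. \<forall>m\<ge>K. \<tau> m \<noteq> 4*n-3}) \<in> null_sets (completion (nu n))"
    by (rule null_sets_completionI)
  then show ?thesis using sub by (rule null_sets_completion_subset[rotated])
qed

end
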